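(* Let $X$ be a polyhedral normed space with closed unit ball $B_X$ and dual unit ball $B_{X^*}$. Let $y\in X$ and $E=J(y)$. Then $L_E=\{x\in X: \phi(x)=\psi(x)\text{ for all }\phi,\psi\in E\}$ equals the linear span of the face $F_E=\{x\in B_X: \phi(x)=1\text{ for all }\phi\in E\}$.
   Context: A polyhedral normed space is a finite-dimensional real normed space whose closed unit ball has finitely many extreme points. The duality map is $J(x)=\{\phi\in B_{X^*}: \phi(x)=\|x\|\}$. The linear span of the empty set is $\{0\}$. *)

theory Defs
  imports "HOL-Analysis.Analysis"
begin

definition polyhedral_normed_space :: "'a::real_normed_vector itself \<Rightarrow> bool" where
  "polyhedral_normed_space TYPE('a) \<longleftrightarrow>
     (\<exists>B::'a set. finite B \<and> span B = UNIV) \<and>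
     finite {x::'a. x extreme_point_of cball 0 1}"

definition dual_ball :: "('a::real_normed_vector \<Rightarrow> real) set" where
  "dual_ball = {\<phi>. linear \<phi> \<and> (\<forall>x. \<bar>\<phi> x\<bar> \<le> norm x)}"

definition duality_map :: "'a::real_normed_vector \<Rightarrow> ('a \<Rightarrow> real) set" where
  "duality_map x = {\<phi> \<in> dual_ball. \<phi> x = norm x}"

definition L_set :: "('a::real_normed_vector \<Rightarrow> real) set \<Rightarrow> 'a set" where
  "L_set E = {x. \<forall>\<phi>\<in>E. \<forall>\<psi>\<in>E. \<phi> x = \<psi> x}"

definition F_face :: "('a::real_normed_vector \<Rightarrow> real) set \<Rightarrow> 'a set" where
  "F_face E = {x \<in> cball 0 1. \<forall>\<phi>\<in>E. \<phi> x = 1}"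

end

theory Submission
  imports Defs
begin


lemma basis_exists:
  assumes "polyhedral_normed_space TYPE('a)"
  obtains B :: "'a::real_normed_vector set" where "finite B" "independent B" "span B = UNIV"
proof -
  obtain S :: "'a set" where S: "finite S" "span S = UNIV"
    using assms unfolding polyhedral_normed_space_def by blast
  obtain B where "B \<subseteq> S" "independent B" "S \<subseteq> span B"
    using maximal_independent_subset by blast
  moreover have "span B = UNIV"
    using \<open>S \<subseteq> span B\<close> S(2) by (metis span_minimal subspace_span top.extremum_uniqueI)
  ultimately show ?thesis using that S(1) finite_subset by blast
qed

lemma rep_linear:
  assumes "independent B" "span B = UNIV"
  shows "linear (\<lambda>x. representation B x b)"
  by (rule linearI) (simp_all add: assms representation_add representation_scale)

lemma rep_sum:
  assumes "finite B" "independent B" "span B = UNIV"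
  shows "(\<Sum>b\<in>B. representation B x b *\<^sub>R b) = x"
  using assms by (intro sum_representation_eq) auto



context
  fixes B :: "'a::real_normed_vector set"
  assumes fB: "finite B" and iB: "independent B" and sB: "span B = UNIV"
begin

abbreviation "crd b x \<equiv> representation B x b"

lemma crd_linear: "linear (crd b)"
  using rep_linear[OF iB sB] .

lemma crd_sum: "(\<Sum>b\<in>B. crd b x *\<^sub>R x') = (\<Sum>b\<in>B. crd b x *\<^sub>R x')" by simp

lemma crd_basis: "b' \<in> B \<Longrightarrow> crd b b' = (if b = b' then 1 else 0)"
  using representation_basis[OF iB] by simp

lemma crd_eq: "(\<Sum>b\<in>B. crd b x *\<^sub>R b) = x"
  using rep_sum[OF fB iB sB] .

lemma crd_scale: "crd b (r *\<^sub>R x) = r * crd b x"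
  using linear_scale[OF crd_linear] by simp

lemma coord_bound: "\<exists>m>0. \<forall>x. m * (\<Sum>b\<in>B. \<bar>crd b x\<bar>) \<le> norm x"
proof -
  define Sig where "Sig = PiE B (\<lambda>_. {-1, 1::real})"
  define V where "V \<sigma> = (\<lambda>b. \<sigma> b *\<^sub>R b) ` B" for \<sigma> :: "'a \<Rightarrow> real"
  define K where "K = (\<Union>\<sigma>\<in>Sig. convex hull (V \<sigma>))"
  have finSig: "finite Sig" unfolding Sig_def using fB by (simp add: finite_PiE)
  have cK: "compact K" unfolding K_def V_def
    using finSig fB by (intro compact_UN finite_imp_compact_convex_hull) auto
  have K0: "0 \<notin> K"
  proof
    assume "0 \<in> K"
    then obtain \<sigma> where \<sigma>: "\<sigma> \<in> Sig" "0 \<in> convex hull (V \<sigma>)" unfolding K_def by blast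
    define l where "l x = (\<Sum>b\<in>B. \<sigma> b * crd b x)" for x
    have ll: "linear l" unfolding l_def
      by (rule linearI) (simp_all add: linear_add[OF crd_linear] crd_scale algebra_simps
          sum.distrib sum_distrib_left)
    have "V \<sigma> \<subseteq> {x. l x = 1}"
    proof
      fix v assume "v \<in> V \<sigma>"
      then obtain b' where b': "b' \<in> B" "v = \<sigma> b' *\<^sub>R b'" unfolding V_def by blast
      have "\<sigma> b' \<in> {-1,1}" using \<sigma>(1) b'(1) unfolding Sig_def by (auto simp: PiE_iff)
      then have s: "\<sigma> b' * \<sigma> b' = 1" by auto
      have "l v = (\<Sum>b\<in>B. \<sigma> b * (\<sigma> b' * (if b = b' then 1 else 0)))"
        unfolding l_def b'(2) crd_scale using crd_basis[OF b'(1)] by simp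
      also have "\<dots> = \<sigma> b' * \<sigma> b'"
        using b'(1) fB by (simp add: if_distrib sum.delta' cong: if_cong)
      finally show "v \<in> {x. l x = 1}" using s by simp
    qed
    moreover have "convex {x. l x = 1}"
      unfolding convex_def using linear_add[OF ll] linear_scale[OF ll] by (simp add: algebra_simps)
    ultimately have "convex hull (V \<sigma>) \<subseteq> {x. l x = 1}" by (rule hull_minimal)
    with \<sigma>(2) have "l 0 = 1" by blast
    moreover have "l 0 = 0" using linear_0[OF ll] .
    ultimately show False by simp
  qed
  have inK: "x /\<^sub>R (\<Sum>b\<in>B. \<bar>crd b x\<bar>) \<in> K" if pos: "(\<Sum>b\<in>B. \<bar>crd b x\<bar>) > 0" for x
  proof -
    define s where "s = (\<Sum>b\<in>B. \<bar>crd b x\<bar>)"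
    define z where "z = x /\<^sub>R s"
    define \<sigma> where "\<sigma> = (\<lambda>b. if b \<in> B then (if crd b z \<ge> 0 then 1 else -1::real) else undefined)"
    have \<sigma>S: "\<sigma> \<in> Sig" unfolding Sig_def \<sigma>_def by (auto simp: PiE_iff extensional_def)
    have cz: "crd b z = crd b x / s" for b unfolding z_def using crd_scale[where r="inverse s" and x=x and b=b]
      by (simp add: field_simps)
    have sum1: "(\<Sum>b\<in>B. \<bar>crd b z\<bar>) = 1"
      unfolding cz using pos unfolding s_def by (simp add: sum_divide_distrib[symmetric])
    have "z = (\<Sum>b\<in>B. crd b z *\<^sub>R b)" using crd_eq by simp
    also have "\<dots> = (\<Sum>b\<in>B. \<bar>crd b z\<bar> *\<^sub>R (\<sigma> b *\<^sub>R b))"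
      by (rule sum.cong) (auto simp: \<sigma>_def split: if_splits)
    also have "\<dots> \<in> convex hull (V \<sigma>)"
      using fB sum1 by (intro convex_sum) (auto simp: V_def intro!: hull_inc)
    finally show ?thesis using \<sigma>S unfolding K_def z_def s_def by blast
  qed
  show ?thesis
  proof (cases "K = {}")
    case True
    then have "(\<Sum>b\<in>B. \<bar>crd b x\<bar>) = 0" for x
    proof -
      have "0 \<le> (\<Sum>b\<in>B. \<bar>crd b x\<bar>)" by (simp add: sum_nonneg)
      moreover have "\<not> (\<Sum>b\<in>B. \<bar>crd b x\<bar>) > 0" using inK[of x] True by blast
      ultimately show ?thesis by linarith
    qed
    then show ?thesis by (intro exI[of _ 1]) auto
  next
    case False
    obtain k where k: "k \<in> K" "\<And>z. z \<in> K \<Longrightarrow> norm k \<le> norm z"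
      using continuous_attains_inf[OF cK False continuous_on_norm_id] by blast
    have mpos: "norm k > 0" using k(1) K0 by auto
    show ?thesis
    proof (intro exI[of _ "norm k"] conjI allI mpos)
      fix x
      show "norm k * (\<Sum>b\<in>B. \<bar>crd b x\<bar>) \<le> norm x"
      proof (cases "(\<Sum>b\<in>B. \<bar>crd b x\<bar>) > 0")
        case True
        have "norm k \<le> norm (x /\<^sub>R (\<Sum>b\<in>B. \<bar>crd b x\<bar>))" using k(2)[OF inK[OF True]] .
        then show ?thesis using True by (simp add: field_simps)
      next
        case False
        moreover have "0 \<le> (\<Sum>b\<in>B. \<bar>crd b x\<bar>)" by (simp add: sum_nonneg)
        ultimately have "(\<Sum>b\<in>B. \<bar>crd b x\<bar>) = 0" by linarith
        then show ?thesis by simp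
      qed
    qed
  qed
qed

lemma crd_outside: "b \<notin> B \<Longrightarrow> crd b x = 0"
  using representation_ne_zero by blast

lemma lin_expand:
  assumes "linear (g::'a \<Rightarrow> real)"
  shows "g x = (\<Sum>b\<in>B. crd b x * g b)"
proof -
  have "g x = g (\<Sum>b\<in>B. crd b x *\<^sub>R b)" using crd_eq by simp
  also have "\<dots> = (\<Sum>b\<in>B. crd b x * g b)"
    using linear_sum[OF assms, of "\<lambda>b. crd b x *\<^sub>R b" B] linear_scale[OF assms] by simp
  finally show ?thesis .
qed

lemma lin_cont:
  assumes "linear (g::'a \<Rightarrow> real)"
  shows "continuous_on S g"
proof -
  obtain m where m: "m > 0" "\<And>x. m * (\<Sum>b\<in>B. \<bar>crd b x\<bar>) \<le> norm x"
    using coord_bound by blast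
  define C where "C = (\<Sum>b\<in>B. \<bar>g b\<bar>)"
  have C0: "C \<ge> 0" unfolding C_def by (simp add: sum_nonneg)
  have "norm (g x) \<le> norm x * (C / m)" for x
  proof -
    have "\<bar>g x\<bar> \<le> (\<Sum>b\<in>B. \<bar>crd b x\<bar> * \<bar>g b\<bar>)"
      unfolding lin_expand[OF assms, of x] by (rule order_trans[OF sum_abs]) (simp add: abs_mult)
    also have "\<dots> \<le> (\<Sum>b\<in>B. (\<Sum>b\<in>B. \<bar>crd b x\<bar>) * \<bar>g b\<bar>)"
      by (intro sum_mono mult_right_mono) (auto intro: member_le_sum fB)
    also have "\<dots> = (\<Sum>b\<in>B. \<bar>crd b x\<bar>) * C" unfolding C_def by (simp add: sum_distrib_left)
    also have "\<dots> \<le> (norm x / m) * C"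
      using m C0 by (intro mult_right_mono) (auto simp: field_simps mult.commute)
    finally show ?thesis by (simp add: field_simps)
  qed
  then have "bounded_linear g"
    using linear_add[OF assms] linear_scale[OF assms] by (intro bounded_linear_intro[where K="C/m"]) auto
  then show ?thesis by (rule linear_continuous_on)
qed

lemma convex_sum_le:
  fixes C :: "'b::real_vector set"
  assumes "finite I" "convex C" "0 \<in> C" "\<And>i. i \<in> I \<Longrightarrow> w i \<ge> 0" "sum w I \<le> 1"
    "\<And>i. i \<in> I \<Longrightarrow> y i \<in> C"
  shows "(\<Sum>i\<in>I. w i *\<^sub>R y i) \<in> C"
proof (cases "sum w I = 0")
  case True
  then have "\<forall>i\<in>I. w i = 0" using assms(1,4) sum_nonneg_eq_0_iff by blast
  then show ?thesis using assms(3) by simp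
next
  case False
  define t where "t = sum w I"
  have t: "t > 0" using False assms(4) sum_nonneg[of I w] unfolding t_def by force
  have z: "(\<Sum>i\<in>I. (w i / t) *\<^sub>R y i) \<in> C"
    using assms t by (intro convex_sum) (auto simp: t_def sum_divide_distrib[symmetric])
  have "(\<Sum>i\<in>I. w i *\<^sub>R y i) = (1 - t) *\<^sub>R 0 + t *\<^sub>R (\<Sum>i\<in>I. (w i / t) *\<^sub>R y i)"
    using t by (simp add: scaleR_sum_right)
  also have "\<dots> \<in> C" using convexD_alt[OF assms(2) assms(3) z, of t] t assms(5) unfolding t_def
    by (simp add: algebra_simps)
  finally show ?thesis .
qed

lemma cball_compact: "compact (cball (0::'a) 1)"
proof -
  obtain m where m: "m > 0" "\<And>x. m * (\<Sum>b\<in>B. \<bar>crd b x\<bar>) \<le> norm x"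
    using coord_bound by blast
  define W where "W = insert 0 ((\<lambda>b. (1/m) *\<^sub>R b) ` B \<union> (\<lambda>b. (-1/m) *\<^sub>R b) ` B)"
  have "cball 0 1 \<subseteq> convex hull W"
  proof
    fix x :: 'a assume x: "x \<in> cball 0 1"
    define v where "v b = (if crd b x \<ge> 0 then 1/m else -1/m) *\<^sub>R b" for b
    have "x = (\<Sum>b\<in>B. (m * \<bar>crd b x\<bar>) *\<^sub>R v b)"
      unfolding v_def using m(1) crd_eq[of x] by (intro sym[OF trans[OF sum.cong[OF refl] crd_eq]])
        (auto simp: field_simps)
    also have "\<dots> \<in> convex hull W"
    proof (rule convex_sum_le)
      show "sum (\<lambda>b. m * \<bar>crd b x\<bar>) B \<le> 1"
        using m(2)[of x] x by (simp add: sum_distrib_left)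
    qed (use fB m(1) in \<open>auto simp: W_def v_def intro!: hull_inc\<close>)
    finally show "x \<in> convex hull W" .
  qed
  moreover have "compact (convex hull W)" unfolding W_def using fB
    by (intro finite_imp_compact_convex_hull) auto
  ultimately show ?thesis by (metis closed_cball compact_Int_closed inf.absorb_iff2)
qed

lemma crd_cont: "continuous_on S (crd b)"
  by (rule lin_cont[OF crd_linear])

lemma max_at_extreme:
  assumes lin: "linear (g::'a \<Rightarrow> real)"
    and ext: "\<And>p. p extreme_point_of cball (0::'a) 1 \<Longrightarrow> g p \<le> a"
    and v: "v \<in> cball (0::'a) 1"
  shows "g v \<le> a"
proof -
  define q where "q x = (\<Sum>t\<in>B. (crd t x)^2)" for x
  have qc: "continuous_on S q" for S unfolding q_def
    by (intro continuous_intros crd_cont)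
  have gc: "continuous_on S g" for S by (rule lin_cont[OF lin])
  obtain v0 where v0: "v0 \<in> cball 0 1" "\<And>w. w \<in> cball 0 1 \<Longrightarrow> g w \<le> g v0"
    using continuous_attains_sup[OF cball_compact _ gc] by auto
  define M where "M = cball (0::'a) 1 \<inter> {x. g x = g v0}"
  have "closed {x. g x = g v0}" by (intro closed_Collect_eq gc continuous_on_const)
  then have cM: "compact M" unfolding M_def using cball_compact by blast
  have "M \<noteq> {}" using v0 unfolding M_def by blast
  then obtain p where p: "p \<in> M" "\<And>w. w \<in> M \<Longrightarrow> q w \<le> q p"
    using continuous_attains_sup[OF cM _ qc] by blast
  have "p extreme_point_of cball 0 1"
    unfolding extreme_point_of_def
  proof (intro conjI ballI notI)
    show "p \<in> cball 0 1" using p(1) unfolding M_def by blast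
  next
    fix x y assume x: "x \<in> cball (0::'a) 1" and y: "y \<in> cball (0::'a) 1" and "p \<in> open_segment x y"
    then obtain u where xy: "x \<noteq> y" and u: "0 < u" "u < 1" and pu: "p = (1 - u) *\<^sub>R x + u *\<^sub>R y"
      by (auto simp: in_segment)
    have gp: "g p = (1 - u) * g x + u * g y"
      unfolding pu using linear_add[OF lin] linear_scale[OF lin] by simp
    have "g x \<le> g v0" "g y \<le> g v0" using v0(2) x y by auto
    moreover have "g p = g v0" using p(1) unfolding M_def by blast
    ultimately have "g x = g v0 \<and> g y = g v0"
    proof -
      assume a: "g x \<le> g v0" "g y \<le> g v0" "g p = g v0"
      have e: "(1 - u) * (g v0 - g x) + u * (g v0 - g y) = 0" using a(3) gp by (simp add: algebra_simps)
      have "(1 - u) * (g v0 - g x) \<ge> 0" "u * (g v0 - g y) \<ge> 0" using a u by auto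
      then have "(1 - u) * (g v0 - g x) = 0" "u * (g v0 - g y) = 0" using e by linarith+
      then show ?thesis using u by auto
    qed
    then have "x \<in> M" "y \<in> M" using x y unfolding M_def by auto
    then have qx: "q x \<le> q p" and qy: "q y \<le> q p" using p(2) by auto
    have cp: "crd t p = (1 - u) * crd t x + u * crd t y" for t
      unfolding pu using linear_add[OF crd_linear] crd_scale by simp
    have "\<exists>t\<in>B. crd t x \<noteq> crd t y"
    proof (rule ccontr)
      assume "\<not> ?thesis"
      then have "(\<Sum>t\<in>B. crd t x *\<^sub>R t) = (\<Sum>t\<in>B. crd t y *\<^sub>R t)" by auto
      then show False using crd_eq xy by simp
    qed
    then obtain t0 where t0: "t0 \<in> B" "crd t0 x \<noteq> crd t0 y" by blast
    have pos: "0 < (\<Sum>t\<in>B. (crd t x - crd t y)^2)"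
      using t0 fB by (intro sum_pos2[where i=t0]) auto
    have eq: "(1 - u) * q x + u * q y - q p = u * (1 - u) * (\<Sum>t\<in>B. (crd t x - crd t y)^2)"
    proof -
      have "(1 - u) * q x + u * q y - q p =
        (\<Sum>t\<in>B. (1 - u) * (crd t x)^2 + u * (crd t y)^2 - ((1 - u) * crd t x + u * crd t y)^2)"
        unfolding q_def cp by (simp add: sum_distrib_left sum.distrib sum_subtractf)
      also have "\<dots> = (\<Sum>t\<in>B. u * (1 - u) * (crd t x - crd t y)^2)"
        by (rule sum.cong) (simp_all add: power2_eq_square algebra_simps)
      also have "\<dots> = u * (1 - u) * (\<Sum>t\<in>B. (crd t x - crd t y)^2)" by (simp add: sum_distrib_left)
      finally show ?thesis .
    qed
    have "0 < u * (1 - u) * (\<Sum>t\<in>B. (crd t x - crd t y)^2)"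
      using u pos by simp
    moreover have "(1 - u) * q x + u * q y \<le> q p"
    proof -
      have "(1 - u) * q x \<le> (1 - u) * q p" "u * q y \<le> u * q p"
        using qx qy u by (auto intro: mult_left_mono)
      then show ?thesis by (simp add: algebra_simps)
    qed
    ultimately show False using eq by linarith
  qed
  then have "g p \<le> a" by (rule ext)
  moreover have "g p = g v0" using p(1) unfolding M_def by blast
  ultimately show ?thesis using v0(2)[OF v] by linarith
qed

end


theorem lemma2p3:
  fixes y :: "'a::real_normed_vector"
  assumes "polyhedral_normed_space TYPE('a)"
  shows "L_set (duality_map y) = span (F_face (duality_map y))"
proof -
  obtain B :: "'a set" where B: "finite B" "independent B" "span B = UNIV"
    using basis_exists[OF assms] by blast
  have finP: "finite {x::'a. x extreme_point_of cball 0 1}"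
    using assms unfolding polyhedral_normed_space_def by blast
  define E where "E = duality_map y"
  define F where "F = F_face E"
  have Elin: "\<And>f. f \<in> E \<Longrightarrow> linear f"
    and Ebd: "\<And>f v. f \<in> E \<Longrightarrow> \<bar>f v\<bar> \<le> norm v"
    and Ey: "\<And>f. f \<in> E \<Longrightarrow> f y = norm y"
    unfolding E_def duality_map_def dual_ball_def by auto
  have Ein: "f \<in> E" if "linear f" "\<And>v. \<bar>f v\<bar> \<le> norm v" "f y = norm y" for f
    using that unfolding E_def duality_map_def dual_ball_def by auto
  have subL: "subspace (L_set E)"
    unfolding subspace_def L_set_def
  proof (intro conjI allI impI ballI CollectI)
    fix f g assume "f \<in> E" "g \<in> E"
    then show "f 0 = g 0" using linear_0[OF Elin[OF \<open>f \<in> E\<close>]] linear_0[OF Elin[OF \<open>g \<in> E\<close>]] by simp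
  next
    fix a b f g assume a: "a \<in> {x. \<forall>\<phi>\<in>E. \<forall>\<psi>\<in>E. \<phi> x = \<psi> x}"
      and b: "b \<in> {x. \<forall>\<phi>\<in>E. \<forall>\<psi>\<in>E. \<phi> x = \<psi> x}" and fg: "f \<in> E" "g \<in> E"
    have "f (a + b) = f a + f b" "g (a + b) = g a + g b" using linear_add[OF Elin[OF fg(1)]] linear_add[OF Elin[OF fg(2)]] by auto
    moreover have "f a = g a" "f b = g b" using a b fg by blast+
    ultimately show "f (a + b) = g (a + b)" by simp
  next
    fix c a f g assume a: "a \<in> {x. \<forall>\<phi>\<in>E. \<forall>\<psi>\<in>E. \<phi> x = \<psi> x}" and fg: "f \<in> E" "g \<in> E"
    have "f (c *\<^sub>R a) = c * f a" "g (c *\<^sub>R a) = c * g a" using linear_scale[OF Elin[OF fg(1)]] linear_scale[OF Elin[OF fg(2)]] by auto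
    moreover have "f a = g a" using a fg by blast
    ultimately show "f (c *\<^sub>R a) = g (c *\<^sub>R a)" by simp
  qed
  have FL: "F \<subseteq> L_set E"
  proof
    fix z assume "z \<in> F"
    then have "\<forall>\<phi>\<in>E. \<phi> z = 1" unfolding F_def F_face_def by blast
    then show "z \<in> L_set E" unfolding L_set_def by (simp del: ball_simps(10)) (metis)
  qed
  have le1: "span F \<subseteq> L_set E" using span_minimal[OF FL subL] .
  moreover have "L_set E \<subseteq> span F"
  proof
    fix x assume x: "x \<in> L_set E"
    show "x \<in> span F"
    proof (cases "E = {}")
      case True
      then have Fc: "F = cball 0 1" unfolding F_def F_face_def by auto
      show ?thesis
      proof (cases "x = 0")
        case True then show ?thesis by (simp add: span_zero)
      next
        case False
        have "x /\<^sub>R norm x \<in> F" unfolding Fc using False by simp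
        then have "norm x *\<^sub>R (x /\<^sub>R norm x) \<in> span F" by (intro span_scale span_base)
        then show ?thesis using False by simp
      qed
    next
      case False
      then obtain f0 where f0: "f0 \<in> E" by blast
      show ?thesis
      proof (rule ccontr)
        assume xF: "x \<notin> span F"
        obtain I where I: "I \<subseteq> span F" "independent I" "span F \<subseteq> span I"
          using maximal_independent_subset by blast
        have "span I \<subseteq> span F" using I(1) by (simp add: span_minimal)
        then have "x \<notin> span I" using xF by blast
        then have "independent (insert x I)" using I(2) by (simp add: independent_insertI)
        then obtain g :: "'a \<Rightarrow> real" where g: "linear g" "\<And>z. z \<in> insert x I \<Longrightarrow> g z = (if z = x then 1 else 0)"
          using linear_independent_extend[of "insert x I" "\<lambda>z. if z = x then 1 else (0::real)"] by blast
        have gx: "g x = 1" using g(2) by simp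
        have g0: "g z = 0" if "z \<in> span F" for z
        proof -
          have "\<And>w. w \<in> I \<Longrightarrow> g w = 0" using g(2) \<open>x \<notin> span I\<close> span_base by fastforce
          then show ?thesis using linear_eq_0_on_span[OF g(1)] that I(3) by blast
        qed
        define Q where "Q = {p. p extreme_point_of cball (0::'a) 1 \<and> p \<notin> F}"
        have finQ: "finite Q" using finP unfolding Q_def by (auto intro: finite_subset)
        have extc: "p \<in> cball 0 1" if "p extreme_point_of cball (0::'a) 1" for p
          using that unfolding extreme_point_of_def by blast
        have ex: "\<exists>\<psi>. \<psi> \<in> E \<and> \<psi> p < 1" if "p \<in> Q" for p
        proof -
          have pc: "norm p \<le> 1" using extc that unfolding Q_def by auto
          have "p \<notin> F" using that unfolding Q_def by auto
          then obtain \<psi> where "\<psi> \<in> E" "\<psi> p \<noteq> 1" using pc unfolding F_def F_face_def by auto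
          moreover have "\<psi> p \<le> 1" using Ebd[OF \<open>\<psi> \<in> E\<close>, of p] pc by linarith
          ultimately have "\<psi> p < 1" by linarith
          then show ?thesis using \<open>\<psi> \<in> E\<close> by blast
        qed
        define psi where "psi p = (SOME \<psi>. \<psi> \<in> E \<and> \<psi> p < 1)" for p
        have psi: "\<And>p. p \<in> Q \<Longrightarrow> psi p \<in> E \<and> psi p p < 1"
          unfolding psi_def by (rule someI_ex[OF ex])
        define n where "n = real (card Q) + 1"
        have n0: "n > 0" unfolding n_def by simp
        define S where "S v = f0 v + (\<Sum>q\<in>Q. psi q v)" for v
        define \<phi> where "\<phi> v = S v / n" for v
        have linS: "linear S" unfolding S_def
        proof (rule linearI)
          fix a b show "f0 (a + b) + (\<Sum>q\<in>Q. psi q (a + b)) = f0 a + (\<Sum>q\<in>Q. psi q a) + (f0 b + (\<Sum>q\<in>Q. psi q b))"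
            using linear_add[OF Elin[OF f0]] linear_add[OF Elin[OF conjunct1[OF psi]]]
            by (simp add: sum.distrib)
        next
          fix r a show "f0 (r *\<^sub>R a) + (\<Sum>q\<in>Q. psi q (r *\<^sub>R a)) = r *\<^sub>R (f0 a + (\<Sum>q\<in>Q. psi q a))"
            using linear_scale[OF Elin[OF f0]] linear_scale[OF Elin[OF conjunct1[OF psi]]]
            by (simp add: sum_distrib_left algebra_simps)
        qed
        have linphi: "linear \<phi>" unfolding \<phi>_def
          by (rule linearI) (simp_all add: linear_add[OF linS] linear_scale[OF linS] add_divide_distrib)
        have Sbd: "\<bar>S v\<bar> \<le> n * norm v" for v
        proof -
          have "\<bar>S v\<bar> \<le> \<bar>f0 v\<bar> + (\<Sum>q\<in>Q. \<bar>psi q v\<bar>)"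
            unfolding S_def by (rule order_trans[OF abs_triangle_ineq]) (simp add: sum_abs)
          also have "\<dots> \<le> norm v + real (card Q) * norm v"
            using Ebd[OF f0] Ebd[OF conjunct1[OF psi]] by (intro add_mono sum_bounded_above) auto
          finally show ?thesis unfolding n_def by (simp add: algebra_simps)
        qed
        have phibd: "\<bar>\<phi> v\<bar> \<le> norm v" for v
          using Sbd[of v] n0 unfolding \<phi>_def by (simp add: divide_le_eq mult.commute)
        have phiy: "\<phi> y = norm y"
          unfolding \<phi>_def S_def n_def using Ey[OF f0] Ey[OF conjunct1[OF psi]]
          by (simp add: field_simps)
        have phiE: "\<phi> \<in> E" using Ein[OF linphi phibd phiy] .
        have phiQ: "\<phi> p < 1" if "p \<in> Q" for p
        proof -
          have pc: "norm p \<le> 1" using extc that unfolding Q_def by auto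
          have "(\<Sum>q\<in>Q. psi q p) < (\<Sum>q\<in>Q. 1)"
          proof (rule sum_strict_mono_ex1[OF finQ])
            show "\<forall>q\<in>Q. psi q p \<le> 1" using Ebd[OF conjunct1[OF psi], of _ p] pc
              by (meson abs_le_D1 order_trans)
            show "\<exists>q\<in>Q. psi q p < 1" using psi that by blast
          qed
          moreover have "f0 p \<le> 1" using Ebd[OF f0, of p] pc by linarith
          ultimately have "S p < n" unfolding S_def n_def by simp
          then show ?thesis unfolding \<phi>_def using n0 by (simp add: divide_less_eq)
        qed
        define \<epsilon> where "\<epsilon> = Min (insert 1 ((\<lambda>p. (1 - \<phi> p) / (\<bar>g p\<bar> + 1)) ` Q))"
        have eps0: "\<epsilon> > 0" unfolding \<epsilon>_def using finQ phiQ
          by (subst Min_gr_iff) (auto intro!: divide_pos_pos)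
        have epsle: "\<epsilon> \<le> (1 - \<phi> p) / (\<bar>g p\<bar> + 1)" if "p \<in> Q" for p
          unfolding \<epsilon>_def using finQ that by (intro Min_le) auto
        define h where "h v = \<phi> v + \<epsilon> * g v" for v
        have linh: "linear h" unfolding h_def
          by (rule linearI) (simp_all add: linear_add[OF linphi] linear_scale[OF linphi]
              linear_add[OF g(1)] linear_scale[OF g(1)] algebra_simps)
        have hext: "h p \<le> 1" if "p extreme_point_of cball (0::'a) 1" for p
        proof (cases "p \<in> Q")
          case True
          have "\<epsilon> * g p \<le> \<epsilon> * \<bar>g p\<bar>" using eps0 by (simp add: mult_left_mono)
          also have "\<dots> \<le> (1 - \<phi> p) / (\<bar>g p\<bar> + 1) * \<bar>g p\<bar>"
            using mult_right_mono[OF epsle[OF True] abs_ge_zero[of "g p"]] by simp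
          also have "\<dots> \<le> 1 - \<phi> p"
            using phiQ[OF True] by (simp add: field_simps)
          finally show ?thesis unfolding h_def by simp
        next
          case False
          then have "p \<in> F" using that unfolding Q_def by auto
          then have "g p = 0" using g0 span_base by blast
          moreover have "\<phi> p \<le> 1" using phibd[of p] extc[OF that] by auto
          ultimately show ?thesis unfolding h_def by simp
        qed
        have hball: "h v \<le> 1" if "v \<in> cball 0 1" for v
          using max_at_extreme[OF B linh hext that] .
        have hbd: "\<bar>h v\<bar> \<le> norm v" for v
        proof (cases "v = 0")
          case True then show ?thesis using linear_0[OF linh] by simp
        next
          case False
          have "h (v /\<^sub>R norm v) \<le> 1" "h (- (v /\<^sub>R norm v)) \<le> 1"
            using False by (auto intro!: hball)
          moreover have "h (v /\<^sub>R norm v) = h v / norm v" "h (- (v /\<^sub>R norm v)) = - (h v / norm v)"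
            using linear_scale[OF linh] linear_neg[OF linh] by (simp_all add: divide_inverse mult.commute)
          ultimately have "h v / norm v \<le> 1" "- 1 \<le> h v / norm v" by auto
          then have "h v \<le> norm v" "- norm v \<le> h v" using False by (simp_all add: divide_le_eq le_divide_eq)
          then show ?thesis by (simp add: abs_le_iff)
        qed
        have gy: "g y = 0"
        proof (cases "y = 0")
          case True then show ?thesis using linear_0[OF g(1)] by simp
        next
          case False
          have "\<phi> (y /\<^sub>R norm y) = 1" if "\<phi> \<in> E" for \<phi>
          proof -
            have "\<phi> (y /\<^sub>R norm y) = \<phi> y / norm y"
              using linear_scale[OF Elin[OF that]] by (simp add: divide_inverse mult.commute)
            then show ?thesis using Ey[OF that] False by simp
          qed
          then have "y /\<^sub>R norm y \<in> F"
            unfolding F_def F_face_def using False by auto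
          then have "g (y /\<^sub>R norm y) = 0" using g0 span_base by blast
          then show ?thesis using linear_scale[OF g(1)] False by simp
        qed
        have hy: "h y = norm y" unfolding h_def using phiy gy by simp
        have hE: "h \<in> E" using Ein[OF linh hbd hy] .
        have "h x = \<phi> x" using x hE phiE unfolding L_set_def by blast
        then show False unfolding h_def using gx eps0 by simp
      qed
    qed
  qed
  ultimately show ?thesis unfolding E_def F_def by blast
qed

end
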